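(* If $G$ is a hypo-unique domination graph, then $b(G)\leq \delta(G)+1$.
   Context: All graphs are finite, simple and undirected. A set $D\subseteq V(G)$ is dominating if every vertex of $G$ not in $D$ has a neighbor in $D$; $\gamma(G)$ is the minimum size of a dominating set, and a dominating set of size $\gamma(G)$ is a $\gamma$-set. $G$ is a hypo-unique domination graph if $G$ has at least two $\gamma$-sets but for every $v\in V(G)$ the graph $G-v$ has exactly one $\gamma$-set. The bondage number $b(G)$ of a graph with at least one edge is the minimum number of edges whose removal from $G$ yields a graph with domination number larger than $\gamma(G)$. $\delta(G)$ is the minimum degree. *)

theory Defs
  imports Main
begin

definition simple_graph :: "'a set \<Rightarrow> 'a set set \<Rightarrow> bool" where
  "simple_graph V E \<longleftrightarrow> finite V \<and> (\<forall>e\<in>E. \<exists>u v. u \<in> V \<and> v \<in> V \<and> u \<noteq> v \<and> e = {u, v})"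

definition dominating :: "'a set \<Rightarrow> 'a set set \<Rightarrow> 'a set \<Rightarrow> bool" where
  "dominating V E D \<longleftrightarrow> D \<subseteq> V \<and> (\<forall>v\<in>V - D. \<exists>u\<in>D. {u, v} \<in> E)"

definition domination_number :: "'a set \<Rightarrow> 'a set set \<Rightarrow> nat" where
  "domination_number V E = (LEAST k. \<exists>D. dominating V E D \<and> card D = k)"

definition gamma_sets :: "'a set \<Rightarrow> 'a set set \<Rightarrow> 'a set set" where
  "gamma_sets V E = {D. dominating V E D \<and> card D = domination_number V E}"

definition delete_vertex :: "'a set \<Rightarrow> 'a set set \<Rightarrow> 'a \<Rightarrow> 'a set \<times> 'a set set" where
  "delete_vertex V E v = (V - {v}, {e \<in> E. v \<notin> e})"

definition hypo_unique_domination :: "'a set \<Rightarrow> 'a set set \<Rightarrow> bool" where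
  "hypo_unique_domination V E \<longleftrightarrow>
     2 \<le> card (gamma_sets V E) \<and>
     (\<forall>v\<in>V. card (gamma_sets (fst (delete_vertex V E v)) (snd (delete_vertex V E v))) = 1)"

definition bondage_number :: "'a set \<Rightarrow> 'a set set \<Rightarrow> nat" where
  "bondage_number V E =
     (LEAST k. \<exists>F. F \<subseteq> E \<and> card F = k \<and> domination_number V (E - F) > domination_number V E)"

definition degree :: "'a set set \<Rightarrow> 'a \<Rightarrow> nat" where
  "degree E v = card {e \<in> E. v \<in> e}"

definition min_degree :: "'a set \<Rightarrow> 'a set set \<Rightarrow> nat" where
  "min_degree V E = Min (degree E ` V)"

end

theory Submission
  imports Defs
begin

lemma dom_V: "dominating V E V"
  unfolding dominating_def by auto

lemma dn_le: "dominating V E D \<Longrightarrow> domination_number V E \<le> card D"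
  unfolding domination_number_def by (rule Least_le) auto

lemma dn_ex: "\<exists>D. dominating V E D \<and> card D = domination_number V E"
  unfolding domination_number_def by (rule LeastI[of _ "card V"]) (use dom_V in auto)

lemma dn_ge: "(\<And>D. dominating V E D \<Longrightarrow> k \<le> card D) \<Longrightarrow> k \<le> domination_number V E"
  using dn_ex by metis

lemma dom_mono: "dominating V E1 S \<Longrightarrow> E1 \<subseteq> E2 \<Longrightarrow> dominating V E2 S"
  unfolding dominating_def by blast

lemma dom_A:
  assumes "dominating V E' S" "v \<in> V" "\<forall>e\<in>E'. v \<notin> e"
  shows "v \<in> S \<and> dominating (V-{v}) E' (S-{v})"
proof -
  have vS: "v \<in> S" using assms unfolding dominating_def by blast
  moreover have "dominating (V-{v}) E' (S-{v})"
    unfolding dominating_def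
  proof (intro conjI ballI)
    show "S - {v} \<subseteq> V - {v}" using assms(1) unfolding dominating_def by blast
  next
    fix x assume x: "x \<in> V - {v} - (S - {v})"
    then obtain u where "u \<in> S" "{u,x} \<in> E'" using assms(1) unfolding dominating_def by blast
    moreover then have "u \<noteq> v" using assms(3) by blast
    ultimately show "\<exists>u\<in>S - {v}. {u, x} \<in> E'" by blast
  qed
  ultimately show ?thesis by blast
qed

lemma dom_B:
  assumes "dominating (V-{v}) E' S'" "v \<in> V"
  shows "dominating V E' (insert v S')"
  using assms unfolding dominating_def by auto

lemma bond_le: "F \<subseteq> E \<Longrightarrow> domination_number V (E - F) > domination_number V E
   \<Longrightarrow> bondage_number V E \<le> card F"
  unfolding bondage_number_def by (rule Least_le) auto

lemma private_nb:
  assumes gs: "gamma_sets VH EH = {D}" and u: "u \<in> D" and w0: "w0 \<in> VH - D" "{u,w0} \<in> EH"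
    and fin: "finite VH"
  shows "\<exists>w\<in>VH - D. {u,w} \<in> EH \<and> (\<forall>y\<in>D. {y,w} \<in> EH \<longrightarrow> y = u)"
proof (rule ccontr)
  assume nop: "\<not> ?thesis"
  have D: "dominating VH EH D" "card D = domination_number VH EH" using gs unfolding gamma_sets_def by auto
  define D2 where "D2 = insert w0 (D - {u})"
  have fD: "finite D" using D(1) fin unfolding dominating_def by (meson finite_subset)
  have "dominating VH EH D2"
    unfolding dominating_def
  proof (intro conjI ballI)
    show "D2 \<subseteq> VH" using D(1) w0 unfolding dominating_def D2_def by blast
  next
    fix x assume x: "x \<in> VH - D2"
    show "\<exists>u\<in>D2. {u, x} \<in> EH"
    proof (cases "x = u")
      case True
      have "{w0, u} \<in> EH" using w0(2) by (simp add: insert_commute)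
      then show ?thesis using True unfolding D2_def by blast
    next
      case False
      then have xD: "x \<in> VH - D" "x \<noteq> w0" using x unfolding D2_def by auto
      then obtain y where y: "y \<in> D" "{y,x} \<in> EH" using D(1) unfolding dominating_def by blast
      show ?thesis
      proof (cases "y = u")
        case False then show ?thesis using y unfolding D2_def by blast
      next
        case True
        have "\<not>({u,x}\<in>EH \<and> (\<forall>y\<in>D. {y,x}\<in>EH \<longrightarrow> y=u))" using nop xD(1) by blast
        then obtain y' where "y' \<in> D" "{y',x} \<in> EH" "y' \<noteq> u" using y True by blast
        then show ?thesis unfolding D2_def by blast
      qed
    qed
  qed
  moreover have "card D2 = card D"
  proof -
    have "w0 \<notin> D - {u}" using w0 by blast
    then have "card D2 = Suc (card (D - {u}))" unfolding D2_def using fD by simp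
    also have "\<dots> = card D" using card.remove[OF fD u] by simp
    finally show ?thesis .
  qed
  ultimately have "D2 \<in> gamma_sets VH EH" using D unfolding gamma_sets_def by auto
  moreover have "D2 \<noteq> D" using w0 unfolding D2_def by blast
  ultimately have "D2 = D" using gs by simp
  then show False using \<open>D2 \<noteq> D\<close> by simp
qed

theorem theorem3p7:
  fixes V :: "'a set" and E :: "'a set set"
  assumes "simple_graph V E"
    and "hypo_unique_domination V E"
  shows "bondage_number V E \<le> min_degree V E + 1"
proof -
  have finV: "finite V" using assms(1) unfolding simple_graph_def by blast
    have gs2: "2 \<le> card (gamma_sets V E)" using assms(2) unfolding hypo_unique_domination_def by blast
  have Vne: "V \<noteq> {}"
  proof
    assume "V = {}"
    then have "gamma_sets V E \<subseteq> {{}}" unfolding gamma_sets_def dominating_def by auto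
    then have "card (gamma_sets V E) \<le> card {{}::'a set}" by (rule card_mono[rotated]) simp
    then have "card (gamma_sets V E) \<le> 1" by simp
    with gs2 show False by simp
  qed
  obtain v where vV: "v \<in> V" and vdeg: "degree E v = min_degree V E"
  proof -
    have "Min (degree E ` V) \<in> degree E ` V" using finV Vne by (intro Min_in) auto
    then obtain x where "x \<in> V" "Min (degree E ` V) = degree E x" by blast
    then show ?thesis using that unfolding min_degree_def by simp
  qed
  define EH where "EH = {e\<in>E. v \<notin> e}"
  define F0 where "F0 = {e\<in>E. v \<in> e}"
  have cF0: "card F0 = min_degree V E" using vdeg unfolding F0_def degree_def by simp
  have EF0: "E - F0 = EH" unfolding EH_def F0_def by auto
  have c1: "card (gamma_sets (V-{v}) EH) = 1"
  proof -
    have "\<forall>v\<in>V. card (gamma_sets (fst (delete_vertex V E v)) (snd (delete_vertex V E v))) = 1"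
      using assms(2) unfolding hypo_unique_domination_def by blast
    then have "card (gamma_sets (fst (delete_vertex V E v)) (snd (delete_vertex V E v))) = 1" using vV by blast
    then show ?thesis unfolding delete_vertex_def EH_def by simp
  qed
  then obtain D' where gsH: "gamma_sets (V-{v}) EH = {D'}" using card_1_singletonE by blast
  have D': "dominating (V-{v}) EH D'" "card D' = domination_number (V-{v}) EH"
    using gsH unfolding gamma_sets_def by auto
  define m where "m = card D'"
  define n where "n = domination_number V E"
  have D'sub: "D' \<subseteq> V - {v}" using D'(1) unfolding dominating_def by blast
  have finD': "finite D'" using D'sub finV by (meson finite_Diff finite_subset)
  have uniq: "\<And>S. dominating (V-{v}) EH S \<Longrightarrow> card S \<le> m \<Longrightarrow> S = D'"
  proof -
    fix S assume S: "dominating (V-{v}) EH S" "card S \<le> m"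
    have "card S = domination_number (V-{v}) EH" using dn_le[OF S(1)] S(2) D'(2) m_def by simp
    then have "S \<in> gamma_sets (V-{v}) EH" using S unfolding gamma_sets_def by auto
    then show "S = D'" using gsH by blast
  qed
  have EHnov: "\<forall>e\<in>EH. v \<notin> e" unfolding EH_def by blast
  have keyS: "\<And>E'. E' \<subseteq> EH \<Longrightarrow> dominating V E' S \<Longrightarrow> v \<in> S \<and> dominating (V-{v}) EH (S-{v}) \<and> card S = card (S - {v}) + 1
       \<and> dominating (V-{v}) E' (S-{v})" for S
  proof -
    fix E' assume E': "E' \<subseteq> EH" "dominating V E' S"
    have "\<forall>e\<in>E'. v \<notin> e" using E'(1) EHnov by blast
    from dom_A[OF E'(2) vV this] have a: "v \<in> S" "dominating (V-{v}) E' (S-{v})" by auto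
    have "finite S" using E'(2) finV unfolding dominating_def by (meson finite_subset)
    then have "card S = card (S - {v}) + 1" using card.remove[OF _ a(1)] by simp
    then show "v \<in> S \<and> dominating (V-{v}) EH (S-{v}) \<and> card S = card (S - {v}) + 1
       \<and> dominating (V-{v}) E' (S-{v})" using a dom_mono[OF a(2) E'(1)] by blast
  qed
  have nle: "n \<le> m + 1"
  proof -
    have "dominating V E (insert v D')" using dom_mono[OF dom_B[OF D'(1) vV]] unfolding EH_def by blast
    then have "n \<le> card (insert v D')" using dn_le n_def by blast
    also have "\<dots> \<le> m + 1" using finD' m_def by (simp add: card_insert_if)
    finally show ?thesis .
  qed
  show ?thesis
  proof (cases "n \<le> m")
    case True
    have "m + 1 \<le> domination_number V (E - F0)"
    proof (rule dn_ge)
      fix S assume S: "dominating V (E - F0) S"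
      note k = keyS[OF order_refl S[unfolded EF0]]
      have k1: "dominating (V-{v}) EH (S-{v})" using k by (rule conjunct1[OF conjunct2])
      have k2: "card S = card (S - {v}) + 1" using k by (rule conjunct1[OF conjunct2[OF conjunct2]])
      have "domination_number (V-{v}) EH \<le> card (S-{v})" by (rule dn_le[OF k1])
      then have "m \<le> card (S - {v})" by (simp only: m_def D'(2))
      then show "m + 1 \<le> card S" using k2 by linarith
    qed
    have F0E: "F0 \<subseteq> E" unfolding F0_def by blast
    have "bondage_number V E \<le> card F0"
      by (rule bond_le[OF F0E]) (use True n_def \<open>m + 1 \<le> domination_number V (E - F0)\<close> in simp)
    then show ?thesis using cF0 by simp
  next
    case False
    then have nm: "n = m + 1" using nle by simp
    have "D' \<noteq> V - {v}"
    proof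
      assume eq: "D' = V - {v}"
      have "gamma_sets V E \<subseteq> {V}"
      proof
        fix S assume "S \<in> gamma_sets V E"
        then have S: "S \<subseteq> V" "card S = n" unfolding gamma_sets_def dominating_def n_def by auto
        have "card V = m + 1" using eq m_def card.remove[OF finV vV] by simp
        then show "S \<in> {V}" using S nm finV by (simp add: card_subset_eq)
      qed
      then have "card (gamma_sets V E) \<le> card {V}" by (rule card_mono[rotated]) simp
      then have "card (gamma_sets V E) \<le> 1" by simp
      with gs2 show False by simp
    qed
    then obtain w0 where w0: "w0 \<in> V - {v} - D'" using D'sub by blast
    then obtain u where u: "u \<in> D'" "{u,w0} \<in> EH" using D'(1) unfolding dominating_def by blast
    obtain w where w: "w \<in> V - {v} - D'" "{u,w} \<in> EH" "\<forall>y\<in>D'. {y,w} \<in> EH \<longrightarrow> y = u"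
      using private_nb[OF gsH u(1) w0 u(2) finite_Diff[OF finV]] by blast
    define F where "F = insert {u,w} F0"
    have FE: "F \<subseteq> E" using w(2) unfolding F_def F0_def EH_def by auto
    have EF: "E - F = EH - {{u,w}}" unfolding F_def EF0[symmetric] by auto
    have "m + 2 \<le> domination_number V (E - F)"
    proof (rule dn_ge)
      fix S assume S: "dominating V (E - F) S"
      have sub: "EH - {{u,w}} \<subseteq> EH" by blast
      from keyS[OF sub S[unfolded EF]] have k: "v \<in> S" "dominating (V-{v}) EH (S-{v})" "card S = card (S - {v}) + 1"
        "dominating (V-{v}) (EH - {{u,w}}) (S-{v})" by (blast, blast, blast, blast)
      have "domination_number (V-{v}) EH \<le> card (S-{v})" by (rule dn_le[OF k(2)])
      then have ge: "m \<le> card (S - {v})" by (simp only: m_def D'(2))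
      have "card (S - {v}) \<noteq> m"
      proof
        assume "card (S - {v}) = m"
        then have "S - {v} = D'" by (intro uniq[OF k(2)]) simp
        then obtain y where "y \<in> D'" "{y,w} \<in> EH - {{u,w}}" using k(4) w(1) unfolding dominating_def by blast
        then have "y = u" using w(3) by blast
        then show False using \<open>{y,w} \<in> EH - {{u,w}}\<close> by simp
      qed
      then show "m + 2 \<le> card S" using ge k(3) by linarith
    qed
    then have "bondage_number V E \<le> card F" using bond_le[OF FE] nm n_def by simp
    also have "\<dots> \<le> card F0 + 1" unfolding F_def by (cases "finite F0") (auto simp: card_insert_if)
    finally show ?thesis using cF0 by simp
  qed
qed

end
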